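(* Let $\omega=e^{2\pi i/3}$ and $p\in[0,1]$. Let $X_1$ be uniformly distributed on $\{\pm 1,\pm\omega,\pm\omega^2\}\subset\mathbb{C}$. For each $n\ge 1$, choose $T_n$ uniformly from $\{1,\dots,n\}$ and set $X_{n+1}=X_{T_n}$ with probability $p/2$, $X_{n+1}=-X_{T_n}$ with probability $p/2$, and $X_{n+1}=\xi_{n+1}$ with probability $1-p$, where $(\xi_n)_{n\ge 1}$ are i.i.d. uniform on $\{\pm 1,\pm\omega,\pm\omega^2\}$, and all the random choices (the $T_n$, the choice among the three alternatives, and the $\xi_n$) are made independently of each other and of the past. Let $S_0=0$ and $S_n=\sum_{i=1}^n X_i$. Then $S_n/n\to 0$ almost surely as $n\to\infty$.
   Context: $\mathbb{C}$ is identified with $\mathbb{R}^2$, so $(S_n)$ is a walk on the triangular lattice in $\mathbb{R}^2$ (the "elephant random walk" on the triangular lattice). *)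

theory Defs
  imports "HOL-Probability.Probability"
begin

definition omega3 :: complex where "omega3 = cis (2 * pi / 3)"

definition dirs :: "complex set" where
  "dirs = {1, -1, omega3, - omega3, omega3 ^ 2, - (omega3 ^ 2)}"

text \<open>Choice among the three alternatives: 0 = copy X_{T_n} (prob p/2),
  1 = copy -X_{T_n} (prob p/2), 2 = fresh xi (prob 1-p).\<close>
definition copy_choice :: "real \<Rightarrow> nat pmf" where
  "copy_choice p = do { b \<leftarrow> bernoulli_pmf p; s \<leftarrow> bernoulli_pmf (1/2);
      return_pmf (if b then (if s then 0 else 1) else 2) }"

text \<open>Randomness of coordinate n: coordinate 0 carries X_1 (third component);
  coordinate n >= 1 carries (T_n, choice_n, xi_{n+1}), all independent.\<close>
definition step_pmf :: "real \<Rightarrow> nat \<Rightarrow> (nat \<times> nat \<times> complex) pmf" where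
  "step_pmf p n = (if n = 0 then map_pmf (\<lambda>z. (0, 0, z)) (pmf_of_set dirs)
     else pair_pmf (pmf_of_set {1..n}) (pair_pmf (copy_choice p) (pmf_of_set dirs)))"

definition elephant_space :: "real \<Rightarrow> (nat \<Rightarrow> nat \<times> nat \<times> complex) measure" where
  "elephant_space p = PiM UNIV (\<lambda>n. measure_pmf (step_pmf p n))"

fun elephant_steps :: "(nat \<Rightarrow> nat \<times> nat \<times> complex) \<Rightarrow> nat \<Rightarrow> complex list" where
  "elephant_steps w 0 = []"
| "elephant_steps w (Suc 0) = [snd (snd (w 0))]"
| "elephant_steps w (Suc (Suc n)) =
     (let xs = elephant_steps w (Suc n); t = fst (w (Suc n));
          c = fst (snd (w (Suc n))); z = snd (snd (w (Suc n)))
      in xs @ [if c = 0 then xs ! (t - 1) else if c = 1 then - (xs ! (t - 1)) else z])"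

definition elephant_S :: "(nat \<Rightarrow> nat \<times> nat \<times> complex) \<Rightarrow> nat \<Rightarrow> complex" where
  "elephant_S w n = sum_list (elephant_steps w n)"

end

theory Submission
  imports Defs "HOL-Library.Discrete_Functions"
begin

definition clipz :: "complex \<Rightarrow> complex" where
  "clipz z = (if z \<in> dirs then z else 0)"

function Xs :: "(nat \<Rightarrow> nat \<times> nat \<times> complex) \<Rightarrow> nat \<Rightarrow> complex" where
  "Xs w 0 = clipz (snd (snd (w 0)))"
| "Xs w (Suc n) =
    (if fst (snd (w (Suc n))) = 0 then
       (if 1 \<le> fst (w (Suc n)) \<and> fst (w (Suc n)) \<le> Suc n then Xs w (fst (w (Suc n)) - 1) else 0)
     else if fst (snd (w (Suc n))) = 1 then
       - (if 1 \<le> fst (w (Suc n)) \<and> fst (w (Suc n)) \<le> Suc n then Xs w (fst (w (Suc n)) - 1) else 0)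
     else clipz (snd (snd (w (Suc n)))))"
  by pat_completeness auto
termination by (relation "Wellfounded.measure snd") auto

lemma omega3_norm: "norm omega3 = 1" by (simp add: omega3_def)

lemma dirs_norm: "z \<in> dirs \<Longrightarrow> norm z = 1"
  by (auto simp: dirs_def norm_power omega3_norm)

lemma dirs_neg: "z \<in> dirs \<Longrightarrow> - z \<in> dirs"
  by (auto simp: dirs_def)

lemma clipz_neg: "clipz (- z) = - clipz z"
  using dirs_neg[of z] dirs_neg[of "-z"] by (auto simp: clipz_def)

lemma norm_clipz: "norm (clipz z) \<le> 1"
  by (auto simp: clipz_def dirs_norm)

lemma norm_Xs: "norm (Xs w k) \<le> 1"
  by (induction w k rule: Xs.induct) (auto simp: norm_clipz)

lemma Xs_local: "(\<And>j. j \<le> k \<Longrightarrow> w j = w' j) \<Longrightarrow> Xs w k = Xs w' k"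
proof (induction w k rule: Xs.induct)
  case (1 w)
  then show ?case by simp
next
  case (2 w n)
  show ?case using 2(1)[OF _ _ 2(3)] 2(2)[OF _ _ _ 2(3)] 2(3)[of "Suc n"]
    by (auto simp del: Xs.simps simp: Xs.simps[of w] Xs.simps[of w'])
qed

abbreviation Ms :: "real \<Rightarrow> nat \<Rightarrow> (nat \<times> nat \<times> complex) measure" where
  "Ms p n \<equiv> measure_pmf (step_pmf p n)"

lemma space_E[simp]: "space (elephant_space p) = UNIV"
  by (auto simp: elephant_space_def space_PiM)

lemma prob_E: "prob_space (elephant_space p)"
  unfolding elephant_space_def by (intro prob_space_PiM) (simp add: prob_space_measure_pmf)

lemma comp_meas[measurable]: "(\<lambda>w. w i) \<in> measurable (elephant_space p) (count_space UNIV)"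
proof -
  have "(\<lambda>w. w i) \<in> measurable (elephant_space p) (Ms p i)"
    unfolding elephant_space_def by (rule measurable_component_singleton) simp
  then show ?thesis by simp
qed

lemma fun_meas: "(\<lambda>w. f (w i)) \<in> measurable (elephant_space p) N"
  if "f \<in> UNIV \<rightarrow> space N"
proof -
  have "f \<in> measurable (count_space UNIV) N" using that by simp
  then show ?thesis using comp_meas by (rule measurable_compose[rotated])
qed

lemma Xs_meas[measurable]: "(\<lambda>w. Xs w k) \<in> borel_measurable (elephant_space p)"
proof (induction k rule: less_induct)
  case (less k)
  show ?case
  proof (cases k)
    case 0
    then show ?thesis using fun_meas[of "\<lambda>y. clipz (snd (snd y))" borel] by simp
  next
    case (Suc n)
    define Y where "Y = (\<lambda>t w. if 1 \<le> t \<and> t \<le> Suc n then Xs w (t - 1) else 0)"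
    have Y: "(\<lambda>w. Y (fst (w (Suc n))) w) \<in> borel_measurable (elephant_space p)"
    proof (rule measurable_compose_countable'[where I=UNIV and f=Y and g="\<lambda>w. fst (w (Suc n))"])
      fix t show "(\<lambda>w. Y t w) \<in> borel_measurable (elephant_space p)"
        unfolding Y_def using less Suc by (cases "1 \<le> t \<and> t \<le> Suc n") auto
      show "(\<lambda>w. fst (w (Suc n))) \<in> measurable (elephant_space p) (count_space UNIV)"
        using fun_meas[of "\<lambda>y. fst y" "count_space UNIV"] by simp
    qed simp
    have c: "(\<lambda>w. fst (snd (w (Suc n)))) \<in> measurable (elephant_space p) (count_space UNIV)"
      using fun_meas[of "\<lambda>y. fst (snd y)" "count_space UNIV"] by simp
    have z: "(\<lambda>w. clipz (snd (snd (w (Suc n))))) \<in> borel_measurable (elephant_space p)"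
      using fun_meas[of "\<lambda>y. clipz (snd (snd y))" borel] by simp
    have eq: "(\<lambda>w. Xs w k) = (\<lambda>w. if fst (snd (w (Suc n))) = 0 then Y (fst (w (Suc n))) w
       else if fst (snd (w (Suc n))) = 1 then - Y (fst (w (Suc n))) w else clipz (snd (snd (w (Suc n)))))"
      by (auto simp: Suc Y_def)
    show ?thesis unfolding eq using Y c z by measurable
  qed
qed

definition sw :: "nat \<Rightarrow> nat" where "sw c = (if c = 0 then 1 else if c = 1 then 0 else c)"
definition phi :: "nat \<times> nat \<times> complex \<Rightarrow> nat \<times> nat \<times> complex" where
  "phi y = (fst y, sw (fst (snd y)), - snd (snd y))"
definition Phi :: "nat \<Rightarrow> (nat \<Rightarrow> nat \<times> nat \<times> complex) \<Rightarrow> (nat \<Rightarrow> nat \<times> nat \<times> complex)" where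
  "Phi n w = w(n := phi (w n))"

lemma bern_half_sym: "map_pmf Not (bernoulli_pmf (1/2)) = bernoulli_pmf (1/2)"
proof -
  have "map_pmf Not (pmf_of_set (UNIV :: bool set)) = pmf_of_set (Not ` UNIV)"
    by (rule map_pmf_of_set_inj) (auto simp: inj_def)
  moreover have "Not ` (UNIV :: bool set) = UNIV"
  proof -
    have "x \<in> Not ` UNIV" for x using image_eqI[of x Not "\<not> x"] by simp
    then show ?thesis by blast
  qed
  ultimately show ?thesis by (simp add: bernoulli_pmf_half_conv_pmf_of_set)
qed

lemma copy_sym: "map_pmf sw (copy_choice p) = copy_choice p"
proof -
  have "map_pmf sw (copy_choice p) = do { b \<leftarrow> bernoulli_pmf p; s \<leftarrow> bernoulli_pmf (1/2);
      return_pmf (if b then (if \<not> s then 0 else 1) else 2) }"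
    unfolding copy_choice_def map_bind_pmf map_return_pmf
    by (intro bind_pmf_cong refl) (auto simp: sw_def)
  also have "\<dots> = do { b \<leftarrow> bernoulli_pmf p; s \<leftarrow> map_pmf Not (bernoulli_pmf (1/2));
      return_pmf (if b then (if s then 0 else 1) else 2) }"
    by (simp add: bind_map_pmf)
  also have "\<dots> = copy_choice p" by (simp add: bern_half_sym copy_choice_def)
  finally show ?thesis .
qed

lemma dirs_sym: "map_pmf uminus (pmf_of_set dirs) = pmf_of_set dirs"
proof -
  have "map_pmf uminus (pmf_of_set dirs) = pmf_of_set (uminus ` dirs)"
    by (rule map_pmf_of_set_inj) (simp_all add: inj_on_def dirs_def)
  moreover have "uminus ` dirs = dirs"
  proof
    show "uminus ` dirs \<subseteq> dirs" using dirs_neg by blast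
    show "dirs \<subseteq> uminus ` dirs"
    proof
      fix x assume "x \<in> dirs"
      then show "x \<in> uminus ` dirs" using dirs_neg[of x] by (intro image_eqI[of _ _ "-x"]) auto
    qed
  qed
  ultimately show ?thesis by simp
qed

lemma step_sym: "n \<noteq> 0 \<Longrightarrow> map_pmf phi (step_pmf p n) = step_pmf p n"
proof -
  assume "n \<noteq> 0"
  then have "step_pmf p n = pair_pmf (pmf_of_set {1..n}) (pair_pmf (map_pmf sw (copy_choice p)) (map_pmf uminus (pmf_of_set dirs)))"
    by (simp add: step_pmf_def copy_sym dirs_sym)
  also have "\<dots> = map_pmf phi (pair_pmf (pmf_of_set {1..n}) (pair_pmf (copy_choice p) (pmf_of_set dirs)))"
    unfolding pair_map_pmf1 pair_map_pmf2 map_pmf_comp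
    by (intro map_pmf_cong refl) (auto simp: phi_def)
  finally show ?thesis using \<open>n \<noteq> 0\<close> by (simp add: step_pmf_def)
qed

lemma Phi_meas[measurable]: "Phi n \<in> measurable (elephant_space p) (elephant_space p)"
  unfolding elephant_space_def
proof (rule measurable_PiM_single')
  fix i :: nat
  have "(\<lambda>w. Phi n w i) = (\<lambda>w. (if i = n then phi else id) (w i))"
    by (auto simp: Phi_def fun_eq_iff)
  moreover have "(\<lambda>w. (if i = n then phi else id) (w i)) \<in> measurable (elephant_space p) (count_space UNIV)"
    by (rule fun_meas) simp
  ultimately show "(\<lambda>w. Phi n w i) \<in> measurable (PiM UNIV (Ms p)) (Ms p i)"
    by (simp add: elephant_space_def)
qed (auto simp: space_PiM)

lemma Phi_distr: assumes "n \<noteq> 0"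
  shows "distr (elephant_space p) (elephant_space p) (Phi n) = elephant_space p"
proof (rule measure_eqI_PiM_infinite[where I=UNIV and M="Ms p"])
  show "sets (distr (elephant_space p) (elephant_space p) (Phi n)) = sets (PiM UNIV (Ms p))"
    by (simp add: elephant_space_def)
  show "sets (elephant_space p) = sets (PiM UNIV (Ms p))"
    by (simp add: elephant_space_def)
  show "finite_measure (distr (elephant_space p) (elephant_space p) (Phi n))"
    using prob_space.prob_space_distr[OF prob_E[of p] Phi_meas[of n p]]
    by (rule prob_space.finite_measure)
next
  fix A :: "nat \<Rightarrow> (nat \<times> nat \<times> complex) set" and J :: "nat set"
  assume J: "finite J" "J \<subseteq> UNIV" and A: "\<And>i. i \<in> J \<Longrightarrow> A i \<in> sets (Ms p i)"
  define A' where "A' = (\<lambda>j. if j = n then phi -` A j else A j)"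
  have X: "prod_emb UNIV (Ms p) J (Pi\<^sub>E J A) \<in> sets (elephant_space p)"
    unfolding elephant_space_def using J A by (intro sets_PiM_I) auto
  have pre: "Phi n -` prod_emb UNIV (Ms p) J (Pi\<^sub>E J A) = prod_emb UNIV (Ms p) J (Pi\<^sub>E J A')"
  proof -
    have *: "\<And>w. (\<forall>j\<in>J. Phi n w j \<in> A j) = (\<forall>j\<in>J. w j \<in> A' j)"
      by (intro ball_cong refl) (simp add: Phi_def A'_def)
    show ?thesis
      unfolding set_eq_iff vimage_eq prod_emb_iff restrict_PiE_iff * by simp
  qed
  have "emeasure (distr (elephant_space p) (elephant_space p) (Phi n)) (prod_emb UNIV (Ms p) J (Pi\<^sub>E J A))
     = emeasure (elephant_space p) (prod_emb UNIV (Ms p) J (Pi\<^sub>E J A'))"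
    using X by (simp add: emeasure_distr pre)
  also have "\<dots> = (\<Prod>j\<in>J. emeasure (Ms p j) (A' j))"
    unfolding elephant_space_def using J
    by (intro emeasure_PiM_emb) (auto simp: prob_space_measure_pmf)
  also have "\<dots> = (\<Prod>j\<in>J. emeasure (Ms p j) (A j))"
  proof (intro prod.cong refl)
    fix j assume "j \<in> J"
    show "emeasure (Ms p j) (A' j) = emeasure (Ms p j) (A j)"
    proof (cases "j = n")
      case True
      have "emeasure (Ms p j) (A' j) = emeasure (measure_pmf (map_pmf phi (step_pmf p n))) (A j)"
        by (simp add: True A'_def)
      also have "\<dots> = emeasure (Ms p j) (A j)" using assms True by (simp add: step_sym)
      finally show ?thesis .
    qed (simp add: A'_def)
  qed
  also have "\<dots> = emeasure (elephant_space p) (prod_emb UNIV (Ms p) J (Pi\<^sub>E J A))"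
    unfolding elephant_space_def using J A
    by (intro emeasure_PiM_emb[symmetric]) (auto simp: prob_space_measure_pmf)
  finally show "emeasure (distr (elephant_space p) (elephant_space p) (Phi n)) (prod_emb UNIV (Ms p) J (Pi\<^sub>E J A))
     = emeasure (elephant_space p) (prod_emb UNIV (Ms p) J (Pi\<^sub>E J A))" .
qed

lemma Xs_Phi_less: "k < n \<Longrightarrow> Xs (Phi n w) k = Xs w k"
  by (rule Xs_local) (auto simp: Phi_def)

lemma Xs_Phi_eq: "n \<noteq> 0 \<Longrightarrow> Xs (Phi n w) n = - Xs w n"
proof -
  assume "n \<noteq> 0"
  then obtain m where m: "n = Suc m" by (cases n) auto
  define y where "y = w (Suc m)"
  have e: "Phi (Suc m) w (Suc m) = phi y" by (simp add: Phi_def y_def)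
  have inner: "1 \<le> fst y \<and> fst y \<le> Suc m \<Longrightarrow> Xs (Phi (Suc m) w) (fst y - 1) = Xs w (fst y - 1)"
    by (intro Xs_Phi_less) auto
  have "Xs (Phi (Suc m) w) (Suc m) = - Xs w (Suc m)"
    unfolding Xs.simps(2)[of "Phi (Suc m) w"] Xs.simps(2)[of w] e y_def[symmetric]
    using inner by (simp add: phi_def sw_def clipz_neg)
  then show ?thesis using m by simp
qed

lemma sum_diff_bound:
  fixes X :: "nat \<Rightarrow> complex"
  assumes "\<And>k. norm (X k) \<le> 1"
  shows "norm ((\<Sum>i<a + d. X i) - (\<Sum>i<a. X i)) \<le> real d"
proof (induction d)
  case 0 then show ?case by simp
next
  case (Suc d)
  have "norm ((\<Sum>i<a + Suc d. X i) - (\<Sum>i<a. X i))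
      = norm (((\<Sum>i<a + d. X i) - (\<Sum>i<a. X i)) + X (a + d))" by (simp add: algebra_simps)
  also have "\<dots> \<le> norm ((\<Sum>i<a + d. X i) - (\<Sum>i<a. X i)) + norm (X (a + d))"
    by (rule norm_triangle_ineq)
  also have "\<dots> \<le> real d + 1" using Suc assms[of "a + d"] by linarith
  finally show ?case by simp
qed

lemma det_slln:
  fixes X :: "nat \<Rightarrow> complex"
  assumes bnd: "\<And>k. norm (X k) \<le> 1"
    and lim: "(\<lambda>k. norm (\<Sum>i<(Suc k)^2. X i) / real ((Suc k)^2)) \<longlonglongrightarrow> 0"
  shows "(\<lambda>n. (\<Sum>i<n. X i) / of_nat n) \<longlonglongrightarrow> 0"
proof -
  define b where "b = (\<lambda>k. norm (\<Sum>i<(Suc k)^2. X i) / real ((Suc k)^2) + 2 / real (Suc k))"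
  have b0: "b \<longlonglongrightarrow> 0"
  proof -
    have "(\<lambda>k. 2 / real (Suc k)) \<longlonglongrightarrow> 0"
      using LIMSEQ_Suc[OF lim_const_over_n[of 2]] by simp
    then show ?thesis unfolding b_def using tendsto_add[OF lim] by simp
  qed
  define kk where "kk = (\<lambda>n. floor_sqrt n - 1)"
  have kk_top: "filterlim kk at_top sequentially"
  proof (subst filterlim_at_top, intro allI)
    fix Z :: nat
    show "eventually (\<lambda>n. Z \<le> kk n) sequentially"
    proof (rule eventually_sequentiallyI[of "(Suc Z)^2"])
      fix n assume "(Suc Z)^2 \<le> n"
      then have "Suc Z \<le> floor_sqrt n" by (rule le_floor_sqrtI)
      then show "Z \<le> kk n" by (simp add: kk_def)
    qed
  qed
  have bk: "(\<lambda>n. b (kk n)) \<longlonglongrightarrow> 0"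
    using filterlim_compose[OF b0 kk_top] by (simp add: o_def)
  have ev: "eventually (\<lambda>n. norm ((\<Sum>i<n. X i) / of_nat n) \<le> b (kk n)) sequentially"
  proof (rule eventually_sequentiallyI[of 1])
    fix n :: nat assume n1: "1 \<le> n"
    define m where "m = floor_sqrt n"
    have m1: "1 \<le> m" using n1 by (simp add: m_def Suc_le_eq)
    have kkm: "Suc (kk n) = m" using m1 by (simp add: kk_def m_def)
    have mn: "m^2 \<le> n" by (simp add: m_def)
    have nm: "n < (Suc m)^2" by (simp add: m_def Suc_floor_sqrt_power2_gt)
    then have dle: "n - m^2 \<le> 2 * m" by (simp add: power2_eq_square)
    define d where "d = n - m^2"
    have nd: "n = m^2 + d" using mn by (simp add: d_def)
    have "norm (\<Sum>i<n. X i) \<le> norm (\<Sum>i<m^2. X i) + real d"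
      using sum_diff_bound[where X=X and a="m^2" and d=d, OF bnd] norm_triangle_ineq2[of "\<Sum>i<n. X i" "\<Sum>i<m^2. X i"]
      unfolding nd by linarith
    also have "\<dots> \<le> norm (\<Sum>i<m^2. X i) + 2 * real m" using dle by (simp add: d_def)
    finally have A: "norm (\<Sum>i<n. X i) \<le> norm (\<Sum>i<m^2. X i) + 2 * real m" .
    have mpos: "0 < real m" using m1 by simp
    have m2pos: "0 < real (m^2)" using m1 by simp
    have "norm ((\<Sum>i<n. X i) / of_nat n) = norm (\<Sum>i<n. X i) / real n"
      by (simp add: norm_divide)
    also have "\<dots> \<le> (norm (\<Sum>i<m^2. X i) + 2 * real m) / real n"
      using A n1 by (intro divide_right_mono) auto
    also have "\<dots> \<le> (norm (\<Sum>i<m^2. X i) + 2 * real m) / real (m^2)"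
      using mn m2pos n1 by (intro divide_left_mono) (auto simp: mult_pos_pos)
    also have "\<dots> = norm (\<Sum>i<m^2. X i) / real (m^2) + 2 / real m"
      using mpos by (simp add: add_divide_distrib power2_eq_square)
    also have "\<dots> = b (kk n)" unfolding b_def kkm ..
    finally show "norm ((\<Sum>i<n. X i) / of_nat n) \<le> b (kk n)" .
  qed
  show ?thesis by (rule Lim_null_comparison[OF ev bk])
qed

definition SS :: "(nat \<Rightarrow> nat \<times> nat \<times> complex) \<Rightarrow> nat \<Rightarrow> complex" where
  "SS w N = (\<Sum>k<N. Xs w k)"

lemma SS_meas[measurable]: "(\<lambda>w. SS w N) \<in> borel_measurable (elephant_space p)"
  unfolding SS_def by measurable

lemma inner_Xs_bound: "\<bar>inner (Xs w i) (Xs w j)\<bar> \<le> 1"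
proof -
  have "\<bar>inner (Xs w i) (Xs w j)\<bar> \<le> norm (Xs w i) * norm (Xs w j)"
    by (rule Cauchy_Schwarz_ineq2)
  also have "\<dots> \<le> 1 * 1"
    by (intro mult_mono norm_Xs) auto
  finally show ?thesis by simp
qed

lemma inner_meas[measurable]: "(\<lambda>w. inner (Xs w i) (Xs w j)) \<in> borel_measurable (elephant_space p)"
  by measurable

lemma inner_integrable: "integrable (elephant_space p) (\<lambda>w. inner (Xs w i) (Xs w j))"
proof -
  interpret prob_space "elephant_space p" by (rule prob_E)
  show ?thesis
    by (rule integrable_const_bound[where B=1]) (auto simp: inner_Xs_bound)
qed

lemma int_inner_zero:
  assumes "i < n"
  shows "integral\<^sup>L (elephant_space p) (\<lambda>w. inner (Xs w i) (Xs w n)) = 0"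
proof -
  have n0: "n \<noteq> 0" using assms by simp
  let ?f = "\<lambda>w. inner (Xs w i) (Xs w n)"
  have "integral\<^sup>L (elephant_space p) ?f = integral\<^sup>L (distr (elephant_space p) (elephant_space p) (Phi n)) ?f"
    by (simp add: Phi_distr[OF n0])
  also have "\<dots> = integral\<^sup>L (elephant_space p) (\<lambda>w. ?f (Phi n w))"
    by (rule integral_distr) measurable
  also have "\<dots> = integral\<^sup>L (elephant_space p) (\<lambda>w. - ?f w)"
    using assms n0 by (simp add: Xs_Phi_less Xs_Phi_eq)
  also have "\<dots> = - integral\<^sup>L (elephant_space p) ?f"
    by (rule integral_minus)
  finally show ?thesis by simp
qed

lemma int_inner:
  "integral\<^sup>L (elephant_space p) (\<lambda>w. inner (Xs w i) (Xs w j)) =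
    (if j = i then integral\<^sup>L (elephant_space p) (\<lambda>w. inner (Xs w i) (Xs w i)) else 0)"
proof (cases "i < j")
  case True then show ?thesis by (simp add: int_inner_zero)
next
  case False
  show ?thesis
  proof (cases "j < i")
    case True
    then show ?thesis using int_inner_zero[OF True, of p] by (simp add: inner_commute)
  next
    case False
    then show ?thesis using \<open>\<not> i < j\<close> by simp
  qed
qed

lemma second_moment: "integral\<^sup>L (elephant_space p) (\<lambda>w. (norm (SS w N))^2) \<le> real N"
proof -
  interpret prob_space "elephant_space p" by (rule prob_E)
  have eq: "(\<lambda>w. (norm (SS w N))^2) = (\<lambda>w. \<Sum>i<N. \<Sum>j<N. inner (Xs w i) (Xs w j))"
    by (simp add: SS_def power2_norm_eq_inner inner_sum_left inner_sum_right) (intro ext sum.swap)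
  have "integral\<^sup>L (elephant_space p) (\<lambda>w. (norm (SS w N))^2)
      = (\<Sum>i<N. \<Sum>j<N. integral\<^sup>L (elephant_space p) (\<lambda>w. inner (Xs w i) (Xs w j)))"
    unfolding eq
    by (simp add: integral_sum inner_integrable integrable_sum)
  also have "\<dots> = (\<Sum>i<N. integral\<^sup>L (elephant_space p) (\<lambda>w. inner (Xs w i) (Xs w i)))"
    by (subst int_inner) simp
  also have "\<dots> \<le> (\<Sum>i<N. 1)"
  proof (rule sum_mono)
    fix i
    have "integral\<^sup>L (elephant_space p) (\<lambda>w. inner (Xs w i) (Xs w i)) \<le> integral\<^sup>L (elephant_space p) (\<lambda>w. 1)"
      using inner_Xs_bound[of _ i i]
      by (intro integral_mono inner_integrable) (auto simp: abs_le_iff)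
    then show "integral\<^sup>L (elephant_space p) (\<lambda>w. inner (Xs w i) (Xs w i)) \<le> 1" using prob_space by simp
  qed
  finally show ?thesis by simp
qed

lemma norm_SS: "norm (SS w N) \<le> real N"
proof -
  have "norm (SS w N) \<le> (\<Sum>k<N. norm (Xs w k))" unfolding SS_def by (rule norm_sum)
  also have "\<dots> \<le> (\<Sum>k<N. 1)" by (intro sum_mono norm_Xs)
  finally show ?thesis by simp
qed

lemma sq_integrable: "integrable (elephant_space p) (\<lambda>w. (norm (SS w N))^2)"
proof -
  interpret prob_space "elephant_space p" by (rule prob_E)
  show ?thesis
    by (rule integrable_const_bound[where B="(real N)^2"]) (auto intro!: power_mono norm_SS)
qed

lemma summable_inv_sq: "summable (\<lambda>k. 1 / real ((Suc k)^2))"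
proof -
  have "summable (\<lambda>n. inverse (real n ^ 2))" by (rule inverse_power_summable) simp
  then have "summable (\<lambda>n. inverse (real (Suc n) ^ 2))" by (subst summable_Suc_iff)
  then show ?thesis by (simp add: inverse_eq_divide del: of_nat_Suc)
qed

lemma AE_sub: "AE w in elephant_space p. (\<lambda>k. norm (SS w ((Suc k)^2)) / real ((Suc k)^2)) \<longlonglongrightarrow> 0"
proof -
  interpret prob_space "elephant_space p" by (rule prob_E)
  define a where "a = (\<lambda>k w. norm (SS w ((Suc k)^2)) / real ((Suc k)^2))"
  define Q where "Q = (\<lambda>k w. (a k w)^2)"
  have Qm[measurable]: "Q k \<in> borel_measurable (elephant_space p)" for k
    unfolding Q_def a_def by measurable
  have Qeq: "Q k = (\<lambda>w. (norm (SS w ((Suc k)^2)))^2 / (real ((Suc k)^2))^2)" for k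
    by (simp add: Q_def a_def power_divide fun_eq_iff)
  have Qint: "integrable (elephant_space p) (Q k)" for k
    unfolding Qeq by (intro integrable_divide sq_integrable)
  have Qle: "integral\<^sup>L (elephant_space p) (Q k) \<le> 1 / real ((Suc k)^2)" for k
  proof -
    define c where "c = real ((Suc k)^2)"
    have c0: "0 < c" by (simp add: c_def)
    have "integral\<^sup>L (elephant_space p) (Q k) = integral\<^sup>L (elephant_space p) (\<lambda>w. (norm (SS w ((Suc k)^2)))^2) / c^2"
      unfolding Qeq c_def by simp
    also have "\<dots> \<le> c / c^2"
      using second_moment[of p "(Suc k)^2"] c0 by (intro divide_right_mono) (auto simp: c_def)
    also have "\<dots> = 1 / c" using c0 by (simp add: power2_eq_square)
    finally show ?thesis by (simp add: c_def)
  qed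
  have "(\<integral>\<^sup>+w. (\<Sum>k. ennreal (Q k w)) \<partial>elephant_space p) = (\<Sum>k. \<integral>\<^sup>+w. ennreal (Q k w) \<partial>elephant_space p)"
    by (rule nn_integral_suminf) measurable
  also have "\<dots> = (\<Sum>k. ennreal (integral\<^sup>L (elephant_space p) (Q k)))"
    by (intro suminf_cong nn_integral_eq_integral Qint) (auto simp: Q_def)
  also have "\<dots> \<le> (\<Sum>k. ennreal (1 / real ((Suc k)^2)))"
    by (intro suminf_le summableI ennreal_leI Qle)
  also have "\<dots> = ennreal (\<Sum>k. 1 / real ((Suc k)^2))"
    by (rule suminf_ennreal2[OF _ summable_inv_sq]) simp
  finally have fin: "(\<integral>\<^sup>+w. (\<Sum>k. ennreal (Q k w)) \<partial>elephant_space p) \<noteq> \<infinity>"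
    by (auto simp: top_unique)
  have "AE w in elephant_space p. (\<Sum>k. ennreal (Q k w)) \<noteq> \<infinity>"
    by (rule nn_integral_PInf_AE[OF _ fin]) measurable
  then show ?thesis
  proof (rule AE_mp, intro AE_I2 impI)
    fix w assume "(\<Sum>k. ennreal (Q k w)) \<noteq> \<infinity>"
    then have "summable (\<lambda>k. Q k w)"
      by (intro summable_suminf_not_top) (auto simp: Q_def)
    then have "(\<lambda>k. Q k w) \<longlonglongrightarrow> 0" by (rule summable_LIMSEQ_zero)
    then have "(\<lambda>k. sqrt (Q k w)) \<longlonglongrightarrow> sqrt 0" by (rule tendsto_real_sqrt)
    moreover have "sqrt (Q k w) = a k w" for k
      by (simp add: Q_def real_sqrt_abs a_def)
    ultimately show "(\<lambda>k. norm (SS w ((Suc k)^2)) / real ((Suc k)^2)) \<longlonglongrightarrow> 0"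
      by (simp add: a_def)
  qed
qed

definition good :: "(nat \<Rightarrow> nat \<times> nat \<times> complex) \<Rightarrow> bool" where
  "good w \<longleftrightarrow> (\<forall>i. snd (snd (w i)) \<in> dirs \<and> (i \<noteq> 0 \<longrightarrow> 1 \<le> fst (w i) \<and> fst (w i) \<le> i))"

lemma dirs_fin: "finite dirs" and dirs_ne: "dirs \<noteq> {}"
  by (auto simp: dirs_def)

lemma AE_good: "AE w in elephant_space p. good w"
  unfolding good_def
proof (subst AE_all_countable, intro allI)
  fix i :: nat
  have "AE y in Ms p i. snd (snd y) \<in> dirs \<and> (i \<noteq> 0 \<longrightarrow> 1 \<le> fst y \<and> fst y \<le> i)"
  proof (cases "i = 0")
    case True
    then show ?thesis
      by (simp add: AE_measure_pmf_iff step_pmf_def dirs_fin dirs_ne)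
  next
    case False
    then show ?thesis
      by (auto simp: AE_measure_pmf_iff step_pmf_def dirs_fin dirs_ne)
  qed
  then show "AE w in elephant_space p. snd (snd (w i)) \<in> dirs \<and> (i \<noteq> 0 \<longrightarrow> 1 \<le> fst (w i) \<and> fst (w i) \<le> i)"
    unfolding elephant_space_def
    by (rule AE_PiM_component[where M="Ms p" and I=UNIV and i=i, rotated 2])
       (auto simp: prob_space_measure_pmf)
qed

lemma steps_eq: "good w \<Longrightarrow> elephant_steps w n = map (Xs w) [0..<n]"
proof (induction w n rule: elephant_steps.induct)
  case (1 w)
  then show ?case by simp
next
  case (2 w)
  then show ?case by (simp add: good_def clipz_def)
next
  case (3 w n)
  have IH: "elephant_steps w (Suc n) = map (Xs w) [0..<Suc n]" using 3 by simp
  have g: "snd (snd (w (Suc n))) \<in> dirs" "1 \<le> fst (w (Suc n))" "fst (w (Suc n)) \<le> Suc n"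
    using 3(2) unfolding good_def by blast+
  have nth: "map (Xs w) [0..<Suc n] ! (fst (w (Suc n)) - 1) = Xs w (fst (w (Suc n)) - 1)"
    using g by (subst nth_map_upt) auto
  show ?case
    unfolding elephant_steps.simps(3)[of w n] Let_def IH nth
    using g by (simp add: clipz_def)
qed

lemma S_eq: "good w \<Longrightarrow> elephant_S w n = SS w n"
proof -
  assume "good w"
  have "sum_list (map (Xs w) [0..<n]) = sum (Xs w) {..<n}" by (induction n) auto
  then show ?thesis using steps_eq[OF \<open>good w\<close>] by (simp add: elephant_S_def SS_def)
qed

theorem mainTheorem1:
  fixes p :: real
  assumes "0 \<le> p" and "p \<le> 1"
  shows "AE w in elephant_space p. (\<lambda>n. elephant_S w n / of_nat n) \<longlonglongrightarrow> 0"
  using AE_good[of p] AE_sub[of p]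
proof (eventually_elim)
  case (elim w)
  have "(\<lambda>n. (\<Sum>i<n. Xs w i) / of_nat n) \<longlonglongrightarrow> 0"
    by (rule det_slln[OF norm_Xs]) (use elim(2) in \<open>simp add: SS_def\<close>)
  then show ?case using S_eq[OF elim(1)] by (simp add: SS_def)
qed

end
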